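(* Assume $\Omega$ is strictly convex, $\mu(\Omega)<\int_{\mathbb{R}^d}R(\boldsymbol{p})\,d\boldsymbol{p}$, and $I\subset(0,1)$ is an admissible mesh family for $\Omega$. For $h\in I$ let $u_h$ be the (unique) solution of the finite element problem on $\mathcal T_h$. Then there exists a constant $M>0$ such that $\|u_h\|_{L^\infty(\Omega_h)}\le M$ for all $h\in I$.
   Context: $\Omega\subset\mathbb{R}^d$ is a bounded open convex domain; $g\in C(\partial\Omega)$; $R:\mathbb{R}^d\to(0,\infty)$ locally integrable; $\mu$ a nonnegative Borel measure on $\Omega$; $W^+(U)$ the convex real-valued functions on open convex $U$; $\partial u(\boldsymbol{x})=\{\boldsymbol{p}:\ u(\boldsymbol{y})\ge u(\boldsymbol{x})+\boldsymbol{p}\cdot(\boldsymbol{y}-\boldsymbol{x})\ \forall\boldsymbol{y}\in U\}$. Strict convexity: $\lambda\boldsymbol{x}+(1-\lambda)\boldsymbol{x}'\in\Omega$ for $\boldsymbol{x},\boldsymbol{x}'\in\overline\Omega$, $0<\lambda<1$. $\Omega_\delta=\{\boldsymbol{x}\in\Omega:\operatorname{dist}(\boldsymbol{x},\partial\Omega)>\delta\}$. A mesh of $\Omega$ with parameter $h>0$ is a finite set $\mathcal T_h$ of closed $d$-simplices contained in $\overline\Omega$ such that: (i) for $T\ne T'$, $T\cap T'$ is a common sub-simplex of both of dimension at most $d-1$; (ii) $h=\max_T\operatorname{diam}T$; (iii) $\Omega_h:=\operatorname{Int}(\bigcup_{T}T)$ is convex; (iv) every vertex of $\mathcal T_h$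 on $\partial\Omega_h$ belongs to $\partial\Omega$. Interior vertices $\boldsymbol{A}_1,\dots,\boldsymbol{A}_{k_h}$, vertices on $\partial\Omega_h$: $\boldsymbol{B}_1,\dots,\boldsymbol{B}_{m_h}$. $M_h(z)$ is the convex hull in $\mathbb{R}^{d+1}$ of $\{(\boldsymbol{A}_i,z_i)\}\cup\{(\boldsymbol{B}_j,g(\boldsymbol{B}_j))\}$; $H_h$ is the set of $v\in W^+(\Omega_h)\cap C(\overline{\Omega_h})$ with $v(\boldsymbol{x})=\inf\{t:(\boldsymbol{x},t)\in M_h(z)\}$ on $\overline{\Omega_h}$ for some $z\in\mathbb{R}^{k_h}$. $\phi_{i,h}$ is the continuous function on $\overline{\Omega_h}$, affine on each simplex, with $\phi_{i,h}(\boldsymbol{A}_j)=\delta_{ij}$, $\phi_{i,h}(\boldsymbol{B}_j)=0$. The finite element problem: find $u_h\in H_h$ with $\int_{\partial u_h(\boldsymbol{A}_i)}R\,d\boldsymbol{p}=\int_{\Omega_h}\phi_{i,h}\,d\mu$ for $1\le i\le k_h$ (sub-differential relative to $\Omega_h$); under the stated hypotheses it has a unique solution. An admissible mesh family is $I\subset(0,1)$ with $0$ as unique accumulation point, a mesh $\mathcal T_h$ for each $h\in I$, and for every $\delta>0$ an $h_\delta>0$ with $\overline{\Omega_\delta}\subset\Omega_h$ for $h\in I$, $h<h_\delta$. *)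

theory Defs
  imports "HOL-Analysis.Analysis"
begin

definition subdiff :: "('a::euclidean_space \<Rightarrow> real) \<Rightarrow> 'a set \<Rightarrow> 'a \<Rightarrow> 'a set" where
  "subdiff u U x = {p. \<forall>y\<in>U. u y \<ge> u x + p \<bullet> (y - x)}"

definition strictly_convex_dom :: "'a::euclidean_space set \<Rightarrow> bool" where
  "strictly_convex_dom \<Omega> \<longleftrightarrow>
     (\<forall>x\<in>closure \<Omega>. \<forall>x'\<in>closure \<Omega>. \<forall>t::real. x \<noteq> x' \<and> 0 < t \<and> t < 1
        \<longrightarrow> t *\<^sub>R x + (1 - t) *\<^sub>R x' \<in> \<Omega>)"

definition locally_integrable :: "('a::euclidean_space \<Rightarrow> real) \<Rightarrow> bool" where
  "locally_integrable R \<longleftrightarrow> (\<forall>K. compact K \<longrightarrow> set_integrable lborel K R)"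

definition inner_dom :: "'a::euclidean_space set \<Rightarrow> real \<Rightarrow> 'a set" where
  "inner_dom \<Omega> \<delta> = {x\<in>\<Omega>. infdist x (frontier \<Omega>) > \<delta>}"

text \<open>A mesh is a set of closed d-simplices (as point sets).\<close>
definition mesh_domain :: "'a::euclidean_space set set \<Rightarrow> 'a set" where
  "mesh_domain \<T> = interior (\<Union>\<T>)"

definition mesh_vertices :: "'a::euclidean_space set set \<Rightarrow> 'a set" where
  "mesh_vertices \<T> = (\<Union>T\<in>\<T>. {x. x extreme_point_of T})"

definition interior_vertices :: "'a::euclidean_space set set \<Rightarrow> 'a set" where
  "interior_vertices \<T> = {A \<in> mesh_vertices \<T>. A \<in> mesh_domain \<T>}"

definition boundary_vertices :: "'a::euclidean_space set set \<Rightarrow> 'a set" where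
  "boundary_vertices \<T> = {B \<in> mesh_vertices \<T>. B \<in> frontier (mesh_domain \<T>)}"

definition is_mesh :: "'a::euclidean_space set \<Rightarrow> 'a set set \<Rightarrow> real \<Rightarrow> bool" where
  "is_mesh \<Omega> \<T> h \<longleftrightarrow>
     finite \<T> \<and> \<T> \<noteq> {} \<and>
     (\<forall>T\<in>\<T>. (int DIM('a)) simplex T \<and> T \<subseteq> closure \<Omega>) \<and>
     (\<forall>T\<in>\<T>. \<forall>T'\<in>\<T>. T \<noteq> T' \<longrightarrow>
        (\<exists>n. n \<le> int DIM('a) - 1 \<and> n simplex (T \<inter> T') \<and>
             (T \<inter> T') face_of T \<and> (T \<inter> T') face_of T')) \<and>
     h = Max (diameter ` \<T>) \<and>
     convex (mesh_domain \<T>) \<and>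
     (\<forall>V\<in>mesh_vertices \<T>. V \<in> frontier (mesh_domain \<T>) \<longrightarrow> V \<in> frontier \<Omega>)"

definition discrete_hull_fun ::
  "'a::euclidean_space set set \<Rightarrow> ('a \<Rightarrow> real) \<Rightarrow> ('a \<Rightarrow> real) \<Rightarrow> 'a \<Rightarrow> real" where
  "discrete_hull_fun \<T> g z x =
     Inf {t. (x, t) \<in> convex hull
              ((\<lambda>A. (A, z A)) ` interior_vertices \<T> \<union> (\<lambda>B. (B, g B)) ` boundary_vertices \<T>)}"

definition H_space :: "'a::euclidean_space set set \<Rightarrow> ('a \<Rightarrow> real) \<Rightarrow> ('a \<Rightarrow> real) set" where
  "H_space \<T> g = {v. convex_on (mesh_domain \<T>) v \<and> continuous_on (closure (mesh_domain \<T>)) v \<and>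
      (\<exists>z. \<forall>x\<in>closure (mesh_domain \<T>). v x = discrete_hull_fun \<T> g z x)}"

definition is_hat_fun :: "'a::euclidean_space set set \<Rightarrow> 'a \<Rightarrow> ('a \<Rightarrow> real) \<Rightarrow> bool" where
  "is_hat_fun \<T> A \<phi> \<longleftrightarrow>
     continuous_on (closure (mesh_domain \<T>)) \<phi> \<and>
     (\<forall>T\<in>\<T>. \<exists>c b. \<forall>x\<in>T. \<phi> x = c \<bullet> x + b) \<and>
     \<phi> A = 1 \<and> (\<forall>V\<in>mesh_vertices \<T>. V \<noteq> A \<longrightarrow> \<phi> V = 0)"

definition fe_solution ::
  "'a::euclidean_space set set \<Rightarrow> ('a \<Rightarrow> real) \<Rightarrow> ('a \<Rightarrow> real) \<Rightarrow> 'a measure \<Rightarrow> ('a \<Rightarrow> real) \<Rightarrow> bool" where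
  "fe_solution \<T> g R \<mu> u \<longleftrightarrow>
     u \<in> H_space \<T> g \<and>
     (\<forall>A\<in>interior_vertices \<T>. \<forall>\<phi>. is_hat_fun \<T> A \<phi> \<longrightarrow>
        (LINT p:subdiff u (mesh_domain \<T>) A|lborel. R p) = (LINT x:mesh_domain \<T>|\<mu>. \<phi> x))"

definition admissible_mesh_family ::
  "'a::euclidean_space set \<Rightarrow> real set \<Rightarrow> (real \<Rightarrow> 'a set set) \<Rightarrow> bool" where
  "admissible_mesh_family \<Omega> I \<T> \<longleftrightarrow>
     I \<subseteq> {0<..<1} \<and> 0 islimpt I \<and> (\<forall>x. x \<noteq> 0 \<longrightarrow> \<not> x islimpt I) \<and>
     (\<forall>h\<in>I. is_mesh \<Omega> (\<T> h) h) \<and>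
     (\<forall>\<delta>>0. \<exists>h\<delta>>0. \<forall>h\<in>I. h < h\<delta> \<longrightarrow> closure (inner_dom \<Omega> \<delta>) \<subseteq> mesh_domain (\<T> h))"

end

theory Submission
  imports Defs
begin

lemma simplex_ext:
  fixes T :: "'a::euclidean_space set"
  assumes "n simplex T"
  obtains C where "finite C" "\<not> affine_dependent C" "T = convex hull C"
    "{x. x extreme_point_of T} = C" "int (card C) = n+1"
proof -
  from assms obtain C where C: "finite C" "\<not> affine_dependent C" "int (card C) = n + 1" "T = convex hull C"
    unfolding simplex by auto
  then have "{x. x extreme_point_of T} = C"
    by (auto simp: extreme_point_of_convex_hull_affine_independent)
  with C that show ?thesis by blast
qed

lemma full_simplex_sub_closure:
  fixes T :: "'a::euclidean_space set"
  assumes "(int DIM('a)) simplex T" "T \<in> \<T>"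
  shows "T \<subseteq> closure (mesh_domain \<T>)"
proof -
  obtain C where C: "finite C" "\<not> affine_dependent C" "T = convex hull C" "int (card C) = int DIM('a)+1"
    using simplex_ext[OF assms(1)] by metis
  have ne: "T \<noteq> {}" using C by auto
  have cv: "convex T" using C by simp
  have "aff_dim T = int DIM('a)" using aff_dim_simplex[OF assms(1)] .
  then have ah: "affine hull T = UNIV" using aff_dim_eq_full by blast
  have "interior T \<noteq> {}"
    using rel_interior_interior[OF ah] rel_interior_eq_empty[OF cv] ne by simp
  then have "closure (interior T) = T"
    using convex_closure_interior[OF cv] closed_simplex[OF assms(1)] by (simp add: closure_closed)
  moreover have "interior T \<subseteq> mesh_domain \<T>"
    unfolding mesh_domain_def using assms(2) by (intro interior_mono) auto
  then have "closure (interior T) \<subseteq> closure (mesh_domain \<T>)" by (rule closure_mono)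
  with \<open>closure (interior T) = T\<close> show ?thesis by simp
qed

lemma mesh_facts:
  fixes \<Omega> :: "'a::euclidean_space set"
  assumes "is_mesh \<Omega> \<T> h"
  shows "finite \<T>" "\<And>T. T \<in> \<T> \<Longrightarrow> (int DIM('a)) simplex T" "\<Union>\<T> \<subseteq> closure \<Omega>"
    "convex (mesh_domain \<T>)"
    "\<And>V. V\<in>mesh_vertices \<T> \<Longrightarrow> V \<in> frontier (mesh_domain \<T>) \<Longrightarrow> V \<in> frontier \<Omega>"
proof -
  have H: "finite \<T> \<and> \<T> \<noteq> {} \<and>
     (\<forall>T\<in>\<T>. (int DIM('a)) simplex T \<and> T \<subseteq> closure \<Omega>) \<and>
     (\<forall>T\<in>\<T>. \<forall>T'\<in>\<T>. T \<noteq> T' \<longrightarrow>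
        (\<exists>n. n \<le> int DIM('a) - 1 \<and> n simplex (T \<inter> T') \<and>
             (T \<inter> T') face_of T \<and> (T \<inter> T') face_of T')) \<and>
     h = Max (diameter ` \<T>) \<and>
     convex (mesh_domain \<T>) \<and>
     (\<forall>V\<in>mesh_vertices \<T>. V \<in> frontier (mesh_domain \<T>) \<longrightarrow> V \<in> frontier \<Omega>)"
    using assms unfolding is_mesh_def .
  then show "finite \<T>" by (elim conjE)
  from H show "\<And>T. T \<in> \<T> \<Longrightarrow> (int DIM('a)) simplex T" by (elim conjE) blast
  from H show "\<Union>\<T> \<subseteq> closure \<Omega>" by (elim conjE) blast
  from H show "convex (mesh_domain \<T>)" by (elim conjE)
  from H have "\<forall>V\<in>mesh_vertices \<T>. V \<in> frontier (mesh_domain \<T>) \<longrightarrow> V \<in> frontier \<Omega>"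
    by (elim conjE)
  then show "\<And>V. V\<in>mesh_vertices \<T> \<Longrightarrow> V \<in> frontier (mesh_domain \<T>) \<Longrightarrow> V \<in> frontier \<Omega>"
    by blast
qed

lemma mesh_closure:
  fixes \<Omega> :: "'a::euclidean_space set"
  assumes "is_mesh \<Omega> \<T> h"
  shows "closure (mesh_domain \<T>) = \<Union>\<T>"
proof
  have "\<forall>T\<in>\<T>. closed T" using mesh_facts(2)[OF assms] closed_simplex by blast
  then have "closed (\<Union>\<T>)" using mesh_facts(1)[OF assms] by (rule closed_Union[rotated])
  then show "closure (mesh_domain \<T>) \<subseteq> \<Union>\<T>"
    unfolding mesh_domain_def by (rule closure_minimal[OF interior_subset])
  show "\<Union>\<T> \<subseteq> closure (mesh_domain \<T>)"
    using full_simplex_sub_closure mesh_facts(2)[OF assms] by blast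
qed

lemma mesh_vertices_finite:
  fixes \<Omega> :: "'a::euclidean_space set"
  assumes "is_mesh \<Omega> \<T> h"
  shows "finite (mesh_vertices \<T>)"
  unfolding mesh_vertices_def
proof (rule finite_UN_I)
  show "finite \<T>" using mesh_facts[OF assms] by blast
  fix T assume "T \<in> \<T>"
  then obtain C where "finite C" "{x. x extreme_point_of T} = C"
    using simplex_ext mesh_facts(2)[OF assms] by metis
  then show "finite {x. x extreme_point_of T}" by simp
qed

lemma mesh_domain_sub:
  fixes \<Omega> :: "'a::euclidean_space set"
  assumes "is_mesh \<Omega> \<T> h" "convex \<Omega>" "open \<Omega>"
  shows "mesh_domain \<T> \<subseteq> \<Omega>"
proof -
  have "mesh_domain \<T> \<subseteq> interior (closure \<Omega>)"
    unfolding mesh_domain_def using mesh_facts(3)[OF assms(1)] by (rule interior_mono)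
  also have "\<dots> = \<Omega>" using convex_interior_closure[OF assms(2)] assms(3) interior_open by simp
  finally show ?thesis .
qed

lemma mesh_compact:
  fixes \<Omega> :: "'a::euclidean_space set"
  assumes "is_mesh \<Omega> \<T> h"
  shows "compact (closure (mesh_domain \<T>))"
  unfolding mesh_closure[OF assms]
  using mesh_facts(1)[OF assms] by (rule compact_Union) (rule compact_simplex[OF mesh_facts(2)[OF assms]])

lemma closure_sub_hull_bv:
  fixes \<Omega> :: "'a::euclidean_space set"
  assumes "is_mesh \<Omega> \<T> h"
  shows "closure (mesh_domain \<T>) \<subseteq> convex hull (boundary_vertices \<T>)"
proof -
  let ?K = "closure (mesh_domain \<T>)"
  have "?K = convex hull {x. x extreme_point_of ?K}"
    using Krein_Milman_Minkowski[OF mesh_compact[OF assms] convex_closure[OF mesh_facts(4)[OF assms]]] .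
  also have "\<dots> \<subseteq> convex hull (boundary_vertices \<T>)"
  proof (rule hull_mono, safe)
    fix e assume e: "e extreme_point_of ?K"
    then have "e \<in> ?K" by (simp add: extreme_point_of_def)
    then obtain T where T: "T \<in> \<T>" "e \<in> T" using mesh_closure[OF assms] by auto
    have "T \<subseteq> ?K" using mesh_closure[OF assms] T by auto
    then have "e extreme_point_of T" using e T unfolding extreme_point_of_def by blast
    then have "e \<in> mesh_vertices \<T>" using T unfolding mesh_vertices_def by blast
    moreover have "e \<notin> mesh_domain \<T>"
    proof
      assume "e \<in> mesh_domain \<T>"
      moreover have "mesh_domain \<T> \<subseteq> interior ?K"
        by (rule interior_maximal[OF closure_subset]) (simp add: mesh_domain_def)
      ultimately have "e \<in> interior ?K" by blast
      then show False using extreme_point_not_in_interior[OF e] by blast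
    qed
    moreover have "interior (mesh_domain \<T>) = mesh_domain \<T>"
      by (simp add: mesh_domain_def)
    ultimately show "e \<in> boundary_vertices \<T>"
      unfolding boundary_vertices_def frontier_def using \<open>e \<in> ?K\<close> by simp
  qed
  finally show ?thesis .
qed

lemma convex_lowerhalf: "convex {q::'a::real_inner \<times> real. m \<le> snd q - p \<bullet> fst q}"
  unfolding convex_def
proof (safe)
  fix a b :: "'a \<times> real" and c1 c2 :: real
  assume h: "m \<le> snd a - p \<bullet> fst a" "m \<le> snd b - p \<bullet> fst b" "0 \<le> c1" "0 \<le> c2" "c1 + c2 = 1"
  then have "c1 * m \<le> c1 * (snd a - p \<bullet> fst a)" "c2 * m \<le> c2 * (snd b - p \<bullet> fst b)"
    by (auto intro: mult_left_mono)
  moreover have "snd (c1 *\<^sub>R a + c2 *\<^sub>R b) - p \<bullet> fst (c1 *\<^sub>R a + c2 *\<^sub>R b)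
      = c1 * (snd a - p \<bullet> fst a) + c2 * (snd b - p \<bullet> fst b)"
    by (simp add: inner_add_right algebra_simps)
  moreover have "m = c1 * m + c2 * m" using h(5) by (metis distrib_right mult_1)
  ultimately show "m \<le> snd (c1 *\<^sub>R a + c2 *\<^sub>R b) - p \<bullet> fst (c1 *\<^sub>R a + c2 *\<^sub>R b)"
    by linarith
qed

lemma convex_upperhalf: "convex {q::'a::real_vector \<times> real. snd q \<le> G}"
  unfolding convex_def
proof (safe)
  fix a b :: "'a \<times> real" and c1 c2 :: real
  assume h: "snd a \<le> G" "snd b \<le> G" "0 \<le> c1" "0 \<le> c2" "c1 + c2 = 1"
  then have "c1 * snd a \<le> c1 * G" "c2 * snd b \<le> c2 * G"
    by (auto intro: mult_left_mono)
  moreover have "G = c1 * G + c2 * G" using h(5) by (metis distrib_right mult_1)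
  ultimately show "snd (c1 *\<^sub>R a + c2 *\<^sub>R b) \<le> G" by simp
qed

definition genset :: "'a::euclidean_space set set \<Rightarrow> ('a\<Rightarrow>real) \<Rightarrow> ('a\<Rightarrow>real) \<Rightarrow> ('a \<times> real) set" where
  "genset \<T> g z = (\<lambda>A. (A, z A)) ` interior_vertices \<T> \<union> (\<lambda>B. (B, g B)) ` boundary_vertices \<T>"

lemma dhf_genset: "discrete_hull_fun \<T> g z x = Inf {t. (x, t) \<in> convex hull genset \<T> g z}"
  unfolding discrete_hull_fun_def genset_def ..

lemma genset_finite:
  fixes \<Omega> :: "'a::euclidean_space set"
  assumes "is_mesh \<Omega> \<T> h"
  shows "finite (genset \<T> g z)"
proof -
  have "finite (interior_vertices \<T>)" "finite (boundary_vertices \<T>)"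
    using mesh_vertices_finite[OF assms] unfolding interior_vertices_def boundary_vertices_def by auto
  then show ?thesis unfolding genset_def by simp
qed

lemma hull_lower:
  assumes "\<forall>q\<in>P. m \<le> snd q - p \<bullet> fst q" "q \<in> convex hull P"
  shows "m \<le> snd q - p \<bullet> fst q"
proof -
  have "convex hull P \<subseteq> {q. m \<le> snd q - p \<bullet> fst q}"
    using assms(1) by (intro hull_minimal convex_lowerhalf) auto
  then show ?thesis using assms(2) by auto
qed

lemma dhf_lower:
  assumes "\<forall>q\<in>genset \<T> g z. m \<le> snd q - p \<bullet> fst q"
    and "(x, t0) \<in> convex hull genset \<T> g z"
  shows "m + p \<bullet> x \<le> discrete_hull_fun \<T> g z x"
    and "bdd_below {t. (x, t) \<in> convex hull genset \<T> g z}"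
proof -
  let ?S = "{t. (x, t) \<in> convex hull genset \<T> g z}"
  have lb: "\<And>t. t \<in> ?S \<Longrightarrow> m + p \<bullet> x \<le> t"
    using hull_lower[OF assms(1)] by fastforce
  have "?S \<noteq> {}" using assms(2) by auto
  then show "m + p \<bullet> x \<le> discrete_hull_fun \<T> g z x"
    unfolding dhf_genset using lb by (intro cInf_greatest) auto
  show "bdd_below ?S" unfolding bdd_below_def using lb by blast
qed

lemma dhf_upper_point:
  assumes "bdd_below {t. (x, t) \<in> convex hull genset \<T> g z}"
    and "(x, t) \<in> convex hull genset \<T> g z"
  shows "discrete_hull_fun \<T> g z x \<le> t"
  unfolding dhf_genset using assms by (intro cInf_lower) auto

lemma exists_point_upper:
  fixes \<Omega> :: "'a::euclidean_space set"
  assumes "is_mesh \<Omega> \<T> h" "x \<in> closure (mesh_domain \<T>)"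
    and "\<And>B. B \<in> boundary_vertices \<T> \<Longrightarrow> g B \<le> G"
  shows "\<exists>t. (x, t) \<in> convex hull genset \<T> g z \<and> t \<le> G"
proof -
  let ?Q = "(\<lambda>B. (B, g B)) ` boundary_vertices \<T>"
  have "fst ` (convex hull ?Q) = convex hull (fst ` ?Q)"
    by (rule convex_hull_linear_image[OF bounded_linear.linear[OF bounded_linear_fst]])
  also have "fst ` ?Q = boundary_vertices \<T>" by force
  finally have "x \<in> fst ` (convex hull ?Q)"
    using closure_sub_hull_bv[OF assms(1)] assms(2) by auto
  then obtain q where q: "q \<in> convex hull ?Q" "fst q = x" by auto
  have "convex hull ?Q \<subseteq> {q. snd q \<le> G}"
    using assms(3) by (intro hull_minimal convex_upperhalf) auto
  moreover have "convex hull ?Q \<subseteq> convex hull genset \<T> g z"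
    unfolding genset_def by (intro hull_mono) auto
  ultimately show ?thesis using q by (intro exI[of _ "snd q"]) auto
qed

lemma subdiff_closed: "closed (subdiff u U x)"
proof -
  have "subdiff u U x = (\<Inter>y\<in>U. {p. (y - x) \<bullet> p \<le> u y - u x})"
    unfolding subdiff_def by (auto simp: inner_commute algebra_simps)
  then show ?thesis by (auto intro!: closed_INT closed_halfspace_le)
qed

lemma subdiff_bounded:
  fixes u :: "'a::euclidean_space \<Rightarrow> real"
  assumes "open U" "x \<in> U" "\<And>y. y \<in> U \<Longrightarrow> u y \<le> G"
  shows "bounded (subdiff u U x)"
proof -
  obtain d where d: "d > 0" "ball x d \<subseteq> U" using assms(1,2) open_contains_ball by blast
  have "norm p \<le> max 0 (2 * (G - u x) / d)" if p: "p \<in> subdiff u U x" for p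
  proof (cases "p = 0")
    case False
    let ?y = "x + (d / 2 / norm p) *\<^sub>R p"
    have "dist x ?y = d/2" using False d(1) by (simp add: dist_norm)
    then have "?y \<in> U" using d by auto
    then have "u ?y \<ge> u x + p \<bullet> (?y - x)" using p unfolding subdiff_def by blast
    moreover have "p \<bullet> (?y - x) = d/2 * norm p"
      using False by (simp add: inner_commute power2_norm_eq_inner[symmetric] power2_eq_square)
    moreover have "u ?y \<le> G" using assms(3) \<open>?y \<in> U\<close> .
    ultimately have "d/2 * norm p \<le> G - u x" by linarith
    then have "norm p \<le> 2 * (G - u x) / d" using d(1) by (simp add: field_simps)
    then show ?thesis by simp
  qed simp
  then show ?thesis unfolding bounded_iff by blast
qed

lemma linear_real_inner:
  fixes g :: "'a::euclidean_space \<Rightarrow> real"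
  assumes "linear g"
  shows "g x = (\<Sum>b\<in>Basis. g b *\<^sub>R b) \<bullet> x"
proof -
  have "g x = g (\<Sum>b\<in>Basis. (x \<bullet> b) *\<^sub>R b)" by (simp add: euclidean_representation)
  also have "\<dots> = (\<Sum>b\<in>Basis. (x \<bullet> b) * g b)"
    using assms by (simp add: linear_sum linear_scale)
  also have "\<dots> = (\<Sum>b\<in>Basis. g b *\<^sub>R b) \<bullet> x"
    unfolding inner_sum_left by (intro sum.cong refl) (simp add: inner_commute)
  finally show ?thesis .
qed

lemma affine_interp:
  fixes C :: "'a::euclidean_space set"
  assumes "\<not> affine_dependent C"
  shows "\<exists>c b. \<forall>w\<in>C. c \<bullet> w + b = f w"
proof (cases "C = {}")
  case True then show ?thesis by auto
next
  case False
  then obtain a where a: "a \<in> C" by auto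
  let ?S = "C - {a}"
  have "insert a ?S = C" using a by auto
  then have "\<not> dependent ((\<lambda>x. -a + x) ` ?S)"
    using assms affine_dependent_iff_dependent[of a ?S] by auto
  then obtain g where g: "linear g" "\<forall>v\<in>(\<lambda>x. -a + x) ` ?S. g v = f (a + v) - f a"
    using linear_independent_extend[of "(\<lambda>x. -a + x) ` ?S" "\<lambda>v. f (a + v) - f a"] by auto
  define c where "c = (\<Sum>b\<in>Basis. g b *\<^sub>R b)"
  have gc: "\<And>x. g x = c \<bullet> x" unfolding c_def by (rule linear_real_inner[OF g(1)])
  show ?thesis
  proof (intro exI[of _ c] exI[of _ "f a - c \<bullet> a"] ballI)
    fix w assume w: "w \<in> C"
    show "c \<bullet> w + (f a - c \<bullet> a) = f w"
    proof (cases "w = a")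
      case True then show ?thesis by simp
    next
      case False
      then have "-a + w \<in> (\<lambda>x. -a + x) ` ?S" using w by auto
      then have "g (-a + w) = f w - f a" using g(2) by auto
      then have "c \<bullet> (-a + w) = f w - f a" using gc by simp
      then have "c \<bullet> w - c \<bullet> a = f w - f a" by (simp add: inner_add_right inner_diff_right)
      then show ?thesis by linarith
    qed
  qed
qed

lemma affine_le_hull:
  assumes "\<forall>w\<in>C. c \<bullet> w + b \<le> k" "x \<in> convex hull C"
  shows "c \<bullet> x + b \<le> k"
proof -
  have "convex hull C \<subseteq> {x. c \<bullet> x \<le> k - b}"
    using assms(1) by (intro hull_minimal convex_halfspace_le) (auto simp: algebra_simps)
  then show ?thesis using assms(2) by auto
qed

lemma affine_ge_hull:
  assumes "\<forall>w\<in>C. k \<le> c \<bullet> w + b" "x \<in> convex hull C"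
  shows "k \<le> c \<bullet> x + b"
proof -
  have "convex hull C \<subseteq> {x. c \<bullet> x \<ge> k - b}"
    using assms(1) by (intro hull_minimal convex_halfspace_ge) (auto simp: algebra_simps)
  then show ?thesis using assms(2) by auto
qed

lemma affine_eq_hull:
  assumes "\<forall>w\<in>C. c \<bullet> w + b = k" "x \<in> convex hull C"
  shows "c \<bullet> x + b = k"
proof -
  have "\<forall>w\<in>C. c \<bullet> w + b \<le> k" "\<forall>w\<in>C. k \<le> c \<bullet> w + b" using assms(1) by auto
  then have "c \<bullet> x + b \<le> k" "k \<le> c \<bullet> x + b"
    using affine_le_hull[of C c b k x] affine_ge_hull[of C k c b x] assms(2) by auto
  then show ?thesis by linarith
qed

definition verts :: "'a::euclidean_space set \<Rightarrow> 'a set" where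
  "verts T = {x. x extreme_point_of T}"

definition coefs :: "'a::euclidean_space set \<Rightarrow> 'a \<Rightarrow> 'a \<times> real" where
  "coefs C A = (SOME cb. \<forall>w\<in>C. fst cb \<bullet> w + snd cb = (if w = A then 1 else 0))"

definition lam :: "'a::euclidean_space set \<Rightarrow> 'a \<Rightarrow> 'a \<Rightarrow> real" where
  "lam C A x = fst (coefs C A) \<bullet> x + snd (coefs C A)"

lemma lam_vert:
  assumes "\<not> affine_dependent C" "w \<in> C"
  shows "lam C A w = (if w = A then 1 else 0)"
proof -
  obtain c b where "\<forall>w\<in>C. c \<bullet> w + b = (if w = A then 1 else (0::real))"
    using affine_interp[OF assms(1), of "\<lambda>w. if w = A then 1 else 0"] by blast
  then have "\<exists>cb. \<forall>w\<in>C. fst cb \<bullet> w + snd cb = (if w = A then 1 else (0::real))"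
    by (intro exI[of _ "(c,b)"]) auto
  then have "\<forall>w\<in>C. fst (coefs C A) \<bullet> w + snd (coefs C A) = (if w = A then 1 else 0)"
    unfolding coefs_def by (rule someI_ex)
  then show ?thesis using assms(2) unfolding lam_def by blast
qed

lemma mesh_simplex_verts:
  fixes \<Omega> :: "'a::euclidean_space set"
  assumes "is_mesh \<Omega> \<T> h" "T \<in> \<T>"
  shows "finite (verts T)" "\<not> affine_dependent (verts T)" "T = convex hull (verts T)"
proof -
  obtain C where C: "finite C" "\<not> affine_dependent C" "T = convex hull C"
    "{x. x extreme_point_of T} = C" "int (card C) = int DIM('a) + 1"
    by (rule simplex_ext[OF mesh_facts(2)[OF assms]])
  then show "finite (verts T)" "\<not> affine_dependent (verts T)" "T = convex hull (verts T)"
    unfolding verts_def by simp_all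
qed

lemma mesh_inter_face:
  fixes \<Omega> :: "'a::euclidean_space set"
  assumes "is_mesh \<Omega> \<T> h" "T \<in> \<T>" "T' \<in> \<T>" "T \<noteq> T'"
  shows "(T \<inter> T') face_of T" "(T \<inter> T') face_of T'"
proof -
  have H: "\<forall>T\<in>\<T>. \<forall>T'\<in>\<T>. T \<noteq> T' \<longrightarrow>
        (\<exists>n. n \<le> int DIM('a) - 1 \<and> n simplex (T \<inter> T') \<and>
             (T \<inter> T') face_of T \<and> (T \<inter> T') face_of T')"
    using assms(1) unfolding is_mesh_def by (elim conjE)
  then show "(T \<inter> T') face_of T" "(T \<inter> T') face_of T'" using assms(2-4) by blast+
qed

lemma lam_agree:
  fixes \<Omega> :: "'a::euclidean_space set"
  assumes "is_mesh \<Omega> \<T> h" "T \<in> \<T>" "T' \<in> \<T>" "x \<in> T" "x \<in> T'"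
  shows "lam (verts T) A x = lam (verts T') A x"
proof (cases "T = T'")
  case False
  note V = mesh_simplex_verts[OF assms(1,2)]
  note V' = mesh_simplex_verts[OF assms(1,3)]
  have f1: "(T \<inter> T') face_of (convex hull (verts T))"
    using mesh_inter_face(1)[OF assms(1-3) False] unfolding V(3)[symmetric] .
  have f2: "(T \<inter> T') face_of (convex hull (verts T'))"
    using mesh_inter_face(2)[OF assms(1-3) False] unfolding V'(3)[symmetric] .
  obtain c1 where c1: "c1 \<subseteq> verts T" "T \<inter> T' = convex hull c1"
    using f1 face_of_convex_hull_affine_independent[OF V(2)] by blast
  obtain c2 where c2: "c2 \<subseteq> verts T'" "T \<inter> T' = convex hull c2"
    using f2 face_of_convex_hull_affine_independent[OF V'(2)] by blast
  have ind1: "\<not> affine_dependent c1" using c1(1) V(2) affine_dependent_subset by blast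
  have sub: "c1 \<subseteq> verts T'"
  proof
    fix w assume "w \<in> c1"
    then have "w extreme_point_of (convex hull c1)"
      using extreme_point_of_convex_hull_affine_independent[OF ind1] by blast
    then have "w extreme_point_of (convex hull c2)" using c1(2) c2(2) by simp
    then have "w \<in> c2" by (rule extreme_point_of_convex_hull)
    then show "w \<in> verts T'" using c2(1) by blast
  qed
  let ?c = "fst (coefs (verts T) A) - fst (coefs (verts T') A)"
  let ?b = "snd (coefs (verts T) A) - snd (coefs (verts T') A)"
  have "\<forall>w\<in>c1. ?c \<bullet> w + ?b = 0"
  proof
    fix w assume "w \<in> c1"
    then have w: "w \<in> verts T" "w \<in> verts T'" using c1(1) sub by auto
    have "lam (verts T) A w = lam (verts T') A w"
      using lam_vert[OF V(2) w(1), of A] lam_vert[OF V'(2) w(2), of A] by simp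
    then show "?c \<bullet> w + ?b = 0" unfolding lam_def by (simp add: inner_diff_left)
  qed
  moreover have "x \<in> convex hull c1" using c1(2) assms(4,5) by blast
  ultimately have "?c \<bullet> x + ?b = 0" by (rule affine_eq_hull)
  then show ?thesis unfolding lam_def by (simp add: inner_diff_left)
qed simp

definition hat :: "'a::euclidean_space set set \<Rightarrow> 'a \<Rightarrow> 'a \<Rightarrow> real" where
  "hat \<T> A x = lam (verts (SOME T. T \<in> \<T> \<and> x \<in> T)) A x"

lemma hat_eq:
  fixes \<Omega> :: "'a::euclidean_space set"
  assumes "is_mesh \<Omega> \<T> h" "T \<in> \<T>" "x \<in> T"
  shows "hat \<T> A x = lam (verts T) A x"
proof -
  let ?T = "SOME T. T \<in> \<T> \<and> x \<in> T"
  have S: "?T \<in> \<T> \<and> x \<in> ?T" by (rule someI[of "\<lambda>T. T \<in> \<T> \<and> x \<in> T" T]) (use assms in auto)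
  have "lam (verts ?T) A x = lam (verts T) A x"
    by (rule lam_agree[OF assms(1) conjunct1[OF S] assms(2) conjunct2[OF S] assms(3)])
  then show ?thesis unfolding hat_def .
qed

lemma hat_is_hat:
  fixes \<Omega> :: "'a::euclidean_space set"
  assumes "is_mesh \<Omega> \<T> h" "A \<in> mesh_vertices \<T>"
  shows "is_hat_fun \<T> A (hat \<T> A)"
  unfolding is_hat_fun_def
proof (intro conjI ballI impI)
  have "continuous_on (\<Union>T\<in>\<T>. T) (hat \<T> A)"
  proof (rule continuous_on_closed_Union)
    show "finite \<T>" using mesh_facts(1)[OF assms(1)] .
    fix T assume T: "T \<in> \<T>"
    show "closed T" using closed_simplex mesh_facts(2)[OF assms(1) T] .
    have "continuous_on T (lam (verts T) A)" unfolding lam_def by (intro continuous_intros)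
    then show "continuous_on T (hat \<T> A)"
      by (rule continuous_on_eq) (simp add: hat_eq[OF assms(1) T])
  qed
  then show "continuous_on (closure (mesh_domain \<T>)) (hat \<T> A)"
    using mesh_closure[OF assms(1)] by simp
next
  fix T assume T: "T \<in> \<T>"
  show "\<exists>c b. \<forall>x\<in>T. hat \<T> A x = c \<bullet> x + b"
  proof (intro exI ballI)
    fix x assume "x \<in> T"
    then show "hat \<T> A x = fst (coefs (verts T) A) \<bullet> x + snd (coefs (verts T) A)"
      using hat_eq[OF assms(1) T] unfolding lam_def by simp
  qed
next
  obtain T where T: "T \<in> \<T>" "A extreme_point_of T" using assms(2) unfolding mesh_vertices_def by blast
  then have "A \<in> T" "A \<in> verts T" by (auto simp: extreme_point_of_def verts_def)
  then show "hat \<T> A A = 1"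
    using hat_eq[OF assms(1) T(1)] lam_vert[OF mesh_simplex_verts(2)[OF assms(1) T(1)]] by simp
next
  fix V assume V: "V \<in> mesh_vertices \<T>" "V \<noteq> A"
  obtain T where T: "T \<in> \<T>" "V extreme_point_of T" using V(1) unfolding mesh_vertices_def by blast
  then have "V \<in> T" "V \<in> verts T" by (auto simp: extreme_point_of_def verts_def)
  then show "hat \<T> A V = 0"
    using hat_eq[OF assms(1) T(1)] lam_vert[OF mesh_simplex_verts(2)[OF assms(1) T(1)]] V(2) by simp
qed

lemma hat_nonneg:
  fixes \<Omega> :: "'a::euclidean_space set"
  assumes "is_mesh \<Omega> \<T> h" "x \<in> \<Union>\<T>"
  shows "0 \<le> hat \<T> A x"
proof -
  obtain T where T: "T \<in> \<T>" "x \<in> T" using assms(2) by blast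
  note V = mesh_simplex_verts[OF assms(1) T(1)]
  have "\<forall>w\<in>verts T. 0 \<le> fst (coefs (verts T) A) \<bullet> w + snd (coefs (verts T) A)"
    using lam_vert[OF V(2)] unfolding lam_def by simp
  then have "0 \<le> fst (coefs (verts T) A) \<bullet> x + snd (coefs (verts T) A)"
    using T(2) V(3) by (intro affine_ge_hull) auto
  then show ?thesis using hat_eq[OF assms(1) T] unfolding lam_def by simp
qed

lemma hat_sum_le:
  fixes \<Omega> :: "'a::euclidean_space set"
  assumes "is_mesh \<Omega> \<T> h" "x \<in> \<Union>\<T>" "finite S"
  shows "(\<Sum>A\<in>S. hat \<T> A x) \<le> 1"
proof -
  obtain T where T: "T \<in> \<T>" "x \<in> T" using assms(2) by blast
  note V = mesh_simplex_verts[OF assms(1) T(1)]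
  let ?c = "\<Sum>A\<in>S. fst (coefs (verts T) A)"
  let ?b = "\<Sum>A\<in>S. snd (coefs (verts T) A)"
  have eq: "\<And>y. (\<Sum>A\<in>S. lam (verts T) A y) = ?c \<bullet> y + ?b"
    unfolding lam_def by (simp add: inner_sum_left sum.distrib)
  have "\<forall>w\<in>verts T. ?c \<bullet> w + ?b \<le> 1"
  proof
    fix w assume w: "w \<in> verts T"
    have "(\<Sum>A\<in>S. lam (verts T) A w) = (\<Sum>A\<in>S. if w = A then 1 else 0)"
      using lam_vert[OF V(2) w] by simp
    also have "\<dots> \<le> 1" using assms(3) by (simp add: sum.delta)
    finally show "?c \<bullet> w + ?b \<le> 1" using eq by simp
  qed
  then have "?c \<bullet> x + ?b \<le> 1" using T(2) V(3) by (intro affine_le_hull) auto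
  moreover have "(\<Sum>A\<in>S. hat \<T> A x) = (\<Sum>A\<in>S. lam (verts T) A x)"
    using hat_eq[OF assms(1) T] by simp
  ultimately show ?thesis using eq by simp
qed

lemma H_spaceD:
  assumes "u \<in> H_space \<T> g"
  obtains z where "\<forall>x\<in>closure (mesh_domain \<T>). u x = discrete_hull_fun \<T> g z x"
  using assms unfolding H_space_def by blast

lemma finite_min_pt:
  fixes P :: "('a::real_inner \<times> real) set"
  assumes "finite P" "P \<noteq> {}"
  obtains q0 where "q0 \<in> P" "\<forall>q\<in>P. snd q0 - p \<bullet> fst q0 \<le> snd q - p \<bullet> fst q"
proof -
  let ?f = "\<lambda>q. snd q - p \<bullet> fst q"
  have "Min (?f ` P) \<in> ?f ` P" using assms by (intro Min_in) auto
  then obtain q0 where q0: "q0 \<in> P" "?f q0 = Min (?f ` P)" by auto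
  have "\<forall>q\<in>P. ?f q0 \<le> ?f q" using q0(2) assms(1) by simp
  then show ?thesis using q0(1) that by blast
qed

lemma bv_frontier:
  fixes \<Omega> :: "'a::euclidean_space set"
  assumes "is_mesh \<Omega> \<T> h" "B \<in> boundary_vertices \<T>"
  shows "B \<in> frontier \<Omega>"
  using assms(2) mesh_facts(5)[OF assms(1)] unfolding boundary_vertices_def by blast

lemma upper_bound:
  fixes \<Omega> :: "'a::euclidean_space set"
  assumes mesh: "is_mesh \<Omega> \<T> h" and G: "\<forall>y\<in>frontier \<Omega>. \<bar>g y\<bar> \<le> G"
    and uH: "u \<in> H_space \<T> g" and x: "x \<in> closure (mesh_domain \<T>)"
  shows "u x \<le> G"
proof -
  obtain z where z: "\<forall>x\<in>closure (mesh_domain \<T>). u x = discrete_hull_fun \<T> g z x"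
    using H_spaceD[OF uH] by blast
  have gB: "\<And>B. B \<in> boundary_vertices \<T> \<Longrightarrow> g B \<le> G"
    using G bv_frontier[OF mesh] by fastforce
  obtain t where t: "(x, t) \<in> convex hull genset \<T> g z" "t \<le> G"
    using exists_point_upper[where g=g and G=G and z=z, OF mesh x gB] by blast
  have "genset \<T> g z \<noteq> {}" using t(1) by auto
  then obtain q0 where q0: "q0 \<in> genset \<T> g z"
    "\<forall>q\<in>genset \<T> g z. snd q0 - 0 \<bullet> fst q0 \<le> snd q - 0 \<bullet> fst q"
    using finite_min_pt[OF genset_finite[OF mesh]] by blast
  have "bdd_below {t. (x, t) \<in> convex hull genset \<T> g z}"
    using dhf_lower(2)[OF q0(2) t(1)] .
  then have "discrete_hull_fun \<T> g z x \<le> t" using dhf_upper_point t(1) by blast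
  then show ?thesis using z x t(2) by simp
qed

lemma cover:
  fixes \<Omega> :: "'a::euclidean_space set"
  assumes mesh: "is_mesh \<Omega> \<T> h" and G: "\<forall>y\<in>frontier \<Omega>. \<bar>g y\<bar> \<le> G"
    and uH: "u \<in> H_space \<T> g"
    and Dm: "\<forall>x\<in>closure \<Omega>. \<forall>y\<in>closure \<Omega>. norm (x - y) \<le> Dm"
    and sub: "mesh_domain \<T> \<subseteq> \<Omega>"
    and x0: "x0 \<in> mesh_domain \<T>" and low: "u x0 < - (G + r * Dm)" and p: "norm p \<le> r"
  shows "\<exists>A\<in>interior_vertices \<T>. p \<in> subdiff u (mesh_domain \<T>) A"
proof -
  let ?D = "mesh_domain \<T>"
  let ?P = "genset \<T> g z"
  obtain z where z: "\<forall>x\<in>closure ?D. u x = discrete_hull_fun \<T> g z x"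
    using H_spaceD[OF uH] by blast
  have gB: "\<And>B. B \<in> boundary_vertices \<T> \<Longrightarrow> g B \<le> G"
    using G bv_frontier[OF mesh] by fastforce
  have pt: "\<And>y. y \<in> closure ?D \<Longrightarrow> \<exists>t. (y, t) \<in> convex hull genset \<T> g z"
    using exists_point_upper[where g=g and G=G and z=z, OF mesh _ gB] by blast
  have x0c: "x0 \<in> closure ?D" using x0 closure_subset by blast
  obtain t0 where t0: "(x0, t0) \<in> convex hull genset \<T> g z" using pt[OF x0c] by blast
  have "genset \<T> g z \<noteq> {}" using t0 by auto
  then obtain q0 where q0: "q0 \<in> genset \<T> g z"
    and qmin: "\<forall>q\<in>genset \<T> g z. snd q0 - p \<bullet> fst q0 \<le> snd q - p \<bullet> fst q"
    using finite_min_pt[OF genset_finite[OF mesh]] by blast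
  define m where "m = snd q0 - p \<bullet> fst q0"
  have mlow: "\<forall>q\<in>genset \<T> g z. m \<le> snd q - p \<bullet> fst q" using qmin unfolding m_def by blast
  have ulow: "\<And>y. y \<in> closure ?D \<Longrightarrow> m + p \<bullet> y \<le> u y"
  proof -
    fix y assume y: "y \<in> closure ?D"
    obtain t where "(y, t) \<in> convex hull genset \<T> g z" using pt[OF y] by blast
    then show "m + p \<bullet> y \<le> u y" using dhf_lower(1)[OF mlow] z y by simp
  qed
  have ux0: "m + p \<bullet> x0 \<le> u x0" using ulow[OF x0c] .
  show ?thesis
  proof (cases "q0 \<in> (\<lambda>B. (B, g B)) ` boundary_vertices \<T>")
    case True
    then obtain B where B: "B \<in> boundary_vertices \<T>" "q0 = (B, g B)" by auto
    have Bf: "B \<in> frontier \<Omega>" using bv_frontier[OF mesh B(1)] .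
    then have "B \<in> closure \<Omega>" by (simp add: frontier_def)
    moreover have "x0 \<in> closure \<Omega>" using x0 sub closure_subset by blast
    ultimately have "norm (x0 - B) \<le> Dm" using Dm by blast
    moreover have "\<bar>p \<bullet> (x0 - B)\<bar> \<le> norm p * norm (x0 - B)" by (rule Cauchy_Schwarz_ineq2)
    moreover have r0: "0 \<le> r" using p norm_ge_zero[of p] by linarith
    moreover have "norm p * norm (x0 - B) \<le> r * Dm"
      using p \<open>norm (x0 - B) \<le> Dm\<close> r0 by (intro mult_mono) auto
    moreover have "\<bar>g B\<bar> \<le> G" using G Bf by blast
    moreover have "m = g B - p \<bullet> B" unfolding m_def B(2) by simp
    moreover have "p \<bullet> x0 - p \<bullet> B = p \<bullet> (x0 - B)" by (simp add: inner_diff_right)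
    ultimately have False using ux0 low by linarith
    then show ?thesis ..
  next
    case False
    then obtain A where A: "A \<in> interior_vertices \<T>" "q0 = (A, z A)"
      using q0 unfolding genset_def by auto
    have AD: "A \<in> ?D" using A(1) unfolding interior_vertices_def by blast
    then have Ac: "A \<in> closure ?D" using closure_subset by blast
    have "(A, z A) \<in> convex hull genset \<T> g z"
      using A q0 hull_inc by metis
    moreover have "bdd_below {t. (A, t) \<in> convex hull genset \<T> g z}"
      using dhf_lower(2)[OF mlow] calculation .
    ultimately have "discrete_hull_fun \<T> g z A \<le> z A" using dhf_upper_point by blast
    then have uA: "u A \<le> z A" using z Ac by simp
    have "p \<in> subdiff u ?D A" unfolding subdiff_def
    proof (intro CollectI ballI)
      fix y assume "y \<in> ?D"
      then have "m + p \<bullet> y \<le> u y" using ulow closure_subset by blast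
      moreover have "m = z A - p \<bullet> A" unfolding m_def A(2) by simp
      moreover have "p \<bullet> (y - A) = p \<bullet> y - p \<bullet> A" by (simp add: inner_diff_right)
      ultimately show "u A + p \<bullet> (y - A) \<le> u y" using uA by linarith
    qed
    then show ?thesis using A(1) by blast
  qed
qed

lemma integral_cover_bound:
  fixes \<Omega> :: "'a::euclidean_space set" and \<mu> :: "'a measure"
  assumes fm: "finite_measure \<mu>" and sets: "sets \<mu> = sets borel"
    and mesh: "is_mesh \<Omega> \<T> h" and sub: "mesh_domain \<T> \<subseteq> \<Omega>" and Ob: "\<Omega> \<in> sets borel"
    and fe: "fe_solution \<T> g R \<mu> u"
    and Rpos: "\<And>p. R p > 0" and Rloc: "locally_integrable R"
    and cov: "cball 0 r \<subseteq> (\<Union>A\<in>interior_vertices \<T>. subdiff u (mesh_domain \<T>) A)"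
    and cpt: "\<forall>A\<in>interior_vertices \<T>. compact (subdiff u (mesh_domain \<T>) A)"
  shows "(LINT p:cball 0 r|lborel. R p) \<le> measure \<mu> \<Omega>"
proof -
  let ?D = "mesh_domain \<T>"
  let ?IV = "interior_vertices \<T>"
  let ?S = "\<lambda>A. subdiff u ?D A"
  have finIV: "finite ?IV"
    using mesh_vertices_finite[OF mesh] unfolding interior_vertices_def by auto
  have intS: "\<And>A. A \<in> ?IV \<Longrightarrow> integrable lborel (\<lambda>p. indicator (?S A) p *\<^sub>R R p)"
    using Rloc cpt unfolding locally_integrable_def set_integrable_def by blast
  have intB: "integrable lborel (\<lambda>p. indicator (cball 0 r) p *\<^sub>R R p)"
    using Rloc compact_cball unfolding locally_integrable_def set_integrable_def by blast
  have step1: "(LINT p:cball 0 r|lborel. R p) \<le> (\<Sum>A\<in>?IV. LINT p:?S A|lborel. R p)"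
  proof -
    have "(LINT p:cball 0 r|lborel. R p) \<le> integral\<^sup>L lborel (\<lambda>p. \<Sum>A\<in>?IV. indicator (?S A) p *\<^sub>R R p)"
      unfolding set_lebesgue_integral_def
    proof (rule integral_mono[OF intB])
      show "integrable lborel (\<lambda>p. \<Sum>A\<in>?IV. indicator (?S A) p *\<^sub>R R p)"
        using intS by (rule Bochner_Integration.integrable_sum)
      fix p :: 'a
      have nn: "\<And>A. 0 \<le> indicator (?S A) p *\<^sub>R R p"
        using Rpos[of p] by (simp add: indicator_def)
      show "indicator (cball 0 r) p *\<^sub>R R p \<le> (\<Sum>A\<in>?IV. indicator (?S A) p *\<^sub>R R p)"
      proof (cases "p \<in> cball 0 r")
        case True
        then obtain A0 where A0: "A0 \<in> ?IV" "p \<in> ?S A0" using cov by blast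
        have "indicator (cball 0 r) p *\<^sub>R R p = indicator (?S A0) p *\<^sub>R R p"
          using True A0(2) by simp
        also have "\<dots> \<le> (\<Sum>A\<in>?IV. indicator (?S A) p *\<^sub>R R p)"
          by (rule member_le_sum[OF A0(1) nn finIV])
        finally show ?thesis .
      next
        case False
        then show ?thesis using nn by (simp add: sum_nonneg)
      qed
    qed
    also have "\<dots> = (\<Sum>A\<in>?IV. LINT p:?S A|lborel. R p)"
      unfolding set_lebesgue_integral_def by (rule Bochner_Integration.integral_sum[OF intS])
    finally show ?thesis .
  qed
  have Dsub: "?D \<subseteq> \<Union>\<T>" using mesh_closure[OF mesh] closure_subset by blast
  have Dopen: "open ?D" unfolding mesh_domain_def by simp
  have Dsets: "?D \<in> sets \<mu>" using sets Dopen by simp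
  have hat_le1: "\<And>A x. A \<in> ?IV \<Longrightarrow> x \<in> ?D \<Longrightarrow> hat \<T> A x \<le> 1"
  proof -
    fix A x assume A: "A \<in> ?IV" and x: "x \<in> ?D"
    have "hat \<T> A x \<le> (\<Sum>A\<in>?IV. hat \<T> A x)"
      using hat_nonneg[OF mesh] x Dsub by (intro member_le_sum[OF A _ finIV]) blast
    also have "\<dots> \<le> 1" using hat_sum_le[OF mesh _ finIV] x Dsub by blast
    finally show "hat \<T> A x \<le> 1" .
  qed
  have intH: "\<And>A. A \<in> ?IV \<Longrightarrow> integrable \<mu> (\<lambda>x. indicator ?D x *\<^sub>R hat \<T> A x)"
  proof -
    fix A assume A: "A \<in> ?IV"
    then have AV: "A \<in> mesh_vertices \<T>" unfolding interior_vertices_def by blast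
    have "continuous_on ?D (hat \<T> A)"
      using hat_is_hat[OF mesh AV] closure_subset unfolding is_hat_fun_def
      by (meson continuous_on_subset)
    then have bm: "(\<lambda>x. indicator ?D x *\<^sub>R hat \<T> A x) \<in> borel_measurable borel"
      using Dopen by (intro borel_measurable_continuous_on_indicator) auto
    have meas: "(\<lambda>x. indicator ?D x *\<^sub>R hat \<T> A x) \<in> borel_measurable \<mu>"
      by (subst measurable_cong_sets[OF sets refl]) (rule bm)
    show "integrable \<mu> (\<lambda>x. indicator ?D x *\<^sub>R hat \<T> A x)"
    proof (rule finite_measure.integrable_const_bound[OF fm _ meas])
      show "AE x in \<mu>. norm (indicator ?D x *\<^sub>R hat \<T> A x) \<le> 1"
      proof (rule AE_I2)
        fix x
        show "norm (indicator ?D x *\<^sub>R hat \<T> A x) \<le> 1"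
        proof (cases "x \<in> ?D")
          case True
          then have "0 \<le> hat \<T> A x" using hat_nonneg[OF mesh, of x A] Dsub by blast
          then show ?thesis using hat_le1[OF A True] True by auto
        qed simp
      qed
    qed
  qed
  have eqs: "\<And>A. A \<in> ?IV \<Longrightarrow> (LINT p:?S A|lborel. R p) = (LINT x:?D|\<mu>. hat \<T> A x)"
  proof -
    fix A assume A: "A \<in> ?IV"
    then have AV: "A \<in> mesh_vertices \<T>" unfolding interior_vertices_def by blast
    show "(LINT p:?S A|lborel. R p) = (LINT x:?D|\<mu>. hat \<T> A x)"
      using fe A hat_is_hat[OF mesh AV] unfolding fe_solution_def by blast
  qed
  have "(\<Sum>A\<in>?IV. LINT p:?S A|lborel. R p) = (\<Sum>A\<in>?IV. LINT x:?D|\<mu>. hat \<T> A x)"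
    using eqs by simp
  also have "\<dots> = integral\<^sup>L \<mu> (\<lambda>x. \<Sum>A\<in>?IV. indicator ?D x *\<^sub>R hat \<T> A x)"
    unfolding set_lebesgue_integral_def by (rule Bochner_Integration.integral_sum[OF intH, symmetric])
  also have "\<dots> \<le> integral\<^sup>L \<mu> (indicator ?D)"
  proof (rule integral_mono)
    show "integrable \<mu> (\<lambda>x. \<Sum>A\<in>?IV. indicator ?D x *\<^sub>R hat \<T> A x)"
      using intH by (rule Bochner_Integration.integrable_sum)
    show "integrable \<mu> (indicator ?D :: 'a \<Rightarrow> real)"
      using finite_measure.emeasure_finite[OF fm, of ?D] Dsets
      by (intro integrable_real_indicator) (auto simp: less_top)
    fix x
    show "(\<Sum>A\<in>?IV. indicator ?D x *\<^sub>R hat \<T> A x) \<le> indicator ?D x"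
    proof (cases "x \<in> ?D")
      case True
      then show ?thesis using hat_sum_le[OF mesh _ finIV, of x] Dsub by auto
    qed simp
  qed
  also have "\<dots> = measure \<mu> ?D"
    using sets_eq_imp_space_eq[OF sets] by simp
  also have "\<dots> \<le> measure \<mu> \<Omega>"
    using finite_measure.finite_measure_mono[OF fm sub] Ob sets by simp
  finally show ?thesis using step1 by linarith
qed

lemma choose_radius:
  fixes R :: "'a::euclidean_space \<Rightarrow> real" and c :: ennreal
  assumes Rpos: "\<And>p. R p > 0" and Rloc: "locally_integrable R"
    and less: "c < (\<integral>\<^sup>+ p. ennreal (R p) \<partial>lborel)"
  shows "\<exists>r\<ge>0. c < ennreal (LINT p:cball 0 r|lborel. R p)"
proof -
  define f where "f n p = ennreal (indicator (cball (0::'a) (real n)) p *\<^sub>R R p)" for n p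
  have intn: "\<And>n. integrable lborel (\<lambda>p. indicator (cball (0::'a) (real n)) p *\<^sub>R R p)"
    using Rloc compact_cball unfolding locally_integrable_def set_integrable_def by blast
  have meas: "\<And>n. f n \<in> borel_measurable lborel"
    unfolding f_def by (rule measurable_compose[OF borel_measurable_integrable[OF intn] measurable_ennreal])
  have inc: "incseq f"
  proof (rule incseq_SucI, rule le_funI)
    fix n p
    have "indicator (cball (0::'a) (real n)) p \<le> (indicator (cball 0 (real (Suc n))) p :: real)"
      by (auto simp: indicator_def)
    then show "f n p \<le> f (Suc n) p" unfolding f_def
      using Rpos[of p] by (intro ennreal_leI) (simp add: mult_right_mono)
  qed
  have sup: "(SUP n. f n p) = ennreal (R p)" for p
  proof (rule antisym)
    show "(SUP n. f n p) \<le> ennreal (R p)"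
    proof (rule SUP_least)
      fix n
      show "f n p \<le> ennreal (R p)" unfolding f_def using Rpos[of p]
        by (intro ennreal_leI) (auto simp: indicator_def)
    qed
    have "p \<in> cball 0 (real (nat \<lceil>norm p\<rceil>))"
      by (simp add: dist_norm)
    then have fe: "f (nat \<lceil>norm p\<rceil>) p = ennreal (R p)" unfolding f_def by simp
    have "f (nat \<lceil>norm p\<rceil>) p \<le> (SUP n. f n p)" by (rule SUP_upper) simp
    then show "ennreal (R p) \<le> (SUP n. f n p)" unfolding fe .
  qed
  have "(\<integral>\<^sup>+ p. ennreal (R p) \<partial>lborel) = (\<integral>\<^sup>+ p. (SUP n. f n p) \<partial>lborel)"
    using sup by simp
  also have "\<dots> = (SUP n. integral\<^sup>N lborel (f n))"
    by (rule nn_integral_monotone_convergence_SUP[OF inc meas])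
  finally have eqS: "(\<integral>\<^sup>+ p. ennreal (R p) \<partial>lborel) = (SUP n. integral\<^sup>N lborel (f n))" .
  have "c < (SUP n. integral\<^sup>N lborel (f n))" using less unfolding eqS .
  then have "\<exists>n\<in>UNIV. c < integral\<^sup>N lborel (f n)" by (simp only: less_SUP_iff)
  then obtain n where n: "c < integral\<^sup>N lborel (f n)" by blast
  have "integral\<^sup>N lborel (f n) = ennreal (LINT p:cball 0 (real n)|lborel. R p)"
    unfolding f_def set_lebesgue_integral_def
  proof (rule nn_integral_eq_integral[OF intn])
    show "AE p in lborel. 0 \<le> indicator (cball (0::'a) (real n)) p *\<^sub>R R p"
      by (intro AE_I2) (auto simp: indicator_def less_imp_le[OF Rpos])
  qed
  then have "c < ennreal (LINT p:cball 0 (real n)|lborel. R p)" using n by simp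
  then show ?thesis by (intro exI[of _ "real n"]) simp
qed

theorem lemma6p3:
  fixes \<Omega> :: "'a::euclidean_space set"
    and g R :: "'a \<Rightarrow> real"
    and \<mu> :: "'a measure"
    and I :: "real set"
    and \<T> :: "real \<Rightarrow> 'a set set"
    and u :: "real \<Rightarrow> 'a \<Rightarrow> real"
  assumes "bounded \<Omega>" "open \<Omega>" "convex \<Omega>" "\<Omega> \<noteq> {}"
    and "continuous_on (frontier \<Omega>) g"
    and "\<And>p. R p > 0" "locally_integrable R"
    and "sets \<mu> = sets borel" "emeasure \<mu> (- \<Omega>) = 0"
    and "strictly_convex_dom \<Omega>"
    and "emeasure \<mu> \<Omega> < (\<integral>\<^sup>+ p. ennreal (R p) \<partial>lborel)"
    and "admissible_mesh_family \<Omega> I \<T>"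
    and "\<And>h. h \<in> I \<Longrightarrow> fe_solution (\<T> h) g R \<mu> (u h)"
  shows "\<exists>M>0. \<forall>h\<in>I. \<forall>x\<in>mesh_domain (\<T> h). \<bar>u h x\<bar> \<le> M"
proof -
  note bdd = assms(1) and opn = assms(2) and cvx = assms(3) and ne = assms(4)
    and gc = assms(5) and Rpos = assms(6) and Rloc = assms(7) and sets = assms(8)
    and null = assms(9) and less = assms(11) and adm = assms(12) and fe = assms(13)
  have space: "space \<mu> = UNIV" using sets_eq_imp_space_eq[OF sets] by simp
  have Osets: "\<Omega> \<in> sets \<mu>" using sets opn by simp
  have cOsets: "- \<Omega> \<in> sets \<mu>" using sets opn by (simp add: closed_def)
  have "emeasure \<mu> \<Omega> \<noteq> \<infinity>" using less by (auto simp: top_unique)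
  moreover have "emeasure \<mu> (space \<mu>) \<le> emeasure \<mu> \<Omega> + emeasure \<mu> (- \<Omega>)"
  proof -
    have "space \<mu> = \<Omega> \<union> - \<Omega>" using space by auto
    then show ?thesis using emeasure_subadditive[OF Osets cOsets] by simp
  qed
  ultimately have "emeasure \<mu> (space \<mu>) \<noteq> \<infinity>" using null by (auto simp: top_unique)
  then have fm: "finite_measure \<mu>" by (rule finite_measureI)
  obtain G0 where G0: "\<forall>y\<in>frontier \<Omega>. \<bar>g y\<bar> \<le> G0"
  proof -
    have "compact (g ` frontier \<Omega>)"
      using compact_continuous_image[OF gc compact_frontier_bounded[OF bdd]] .
    then have "bounded (g ` frontier \<Omega>)" by (rule compact_imp_bounded)
    then obtain B where "\<forall>v\<in>g ` frontier \<Omega>. norm v \<le> B"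
      unfolding bounded_iff by blast
    then show ?thesis using that by auto
  qed
  define G where "G = max 0 G0"
  have G: "\<forall>y\<in>frontier \<Omega>. \<bar>g y\<bar> \<le> G" "G \<ge> 0" using G0 unfolding G_def by auto
  define Dm where "Dm = diameter (closure \<Omega>)"
  have Dm: "\<forall>x\<in>closure \<Omega>. \<forall>y\<in>closure \<Omega>. norm (x - y) \<le> Dm"
    using diameter_bounded_bound[OF bounded_closure[OF bdd]] unfolding Dm_def by (simp add: dist_norm)
  obtain x1 where "x1 \<in> \<Omega>" using ne by blast
  then have "norm (x1 - x1) \<le> Dm" using Dm closure_subset by blast
  then have Dm0: "Dm \<ge> 0" by simp
  obtain r where r: "r \<ge> 0" "emeasure \<mu> \<Omega> < ennreal (LINT p:cball 0 r|lborel. R p)"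
    using choose_radius[OF Rpos Rloc less] by blast
  have meshes: "\<And>h. h \<in> I \<Longrightarrow> is_mesh \<Omega> (\<T> h) h"
    using adm unfolding admissible_mesh_family_def by blast
  have bound: "\<bar>u h x\<bar> \<le> G + r * Dm" if h: "h \<in> I" and x: "x \<in> mesh_domain (\<T> h)" for h x
  proof -
    let ?D = "mesh_domain (\<T> h)"
    note mesh = meshes[OF h]
    have feh: "fe_solution (\<T> h) g R \<mu> (u h)" using fe[OF h] .
    then have uH: "u h \<in> H_space (\<T> h) g" unfolding fe_solution_def by blast
    have up: "\<And>y. y \<in> closure ?D \<Longrightarrow> u h y \<le> G"
      using upper_bound[OF mesh G(1) uH] by blast
    have sub: "?D \<subseteq> \<Omega>" using mesh_domain_sub[OF mesh cvx opn] .
    have upx: "u h x \<le> G" using up x closure_subset by blast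
    have lowx: "- (G + r * Dm) \<le> u h x"
    proof (rule ccontr)
      assume "\<not> - (G + r * Dm) \<le> u h x"
      then have low: "u h x < - (G + r * Dm)" by simp
      have cov: "cball 0 r \<subseteq> (\<Union>A\<in>interior_vertices (\<T> h). subdiff (u h) ?D A)"
      proof
        fix p :: 'a assume "p \<in> cball 0 r"
        then have "norm p \<le> r" by simp
        then show "p \<in> (\<Union>A\<in>interior_vertices (\<T> h). subdiff (u h) ?D A)"
          using cover[OF mesh G(1) uH Dm sub x low] by blast
      qed
      have cpt: "\<forall>A\<in>interior_vertices (\<T> h). compact (subdiff (u h) ?D A)"
      proof
        fix A assume "A \<in> interior_vertices (\<T> h)"
        then have A: "A \<in> ?D" unfolding interior_vertices_def by blast
        have oD: "open ?D" by (simp add: mesh_domain_def)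
        have "\<And>y. y \<in> ?D \<Longrightarrow> u h y \<le> G" using up closure_subset by blast
        then have "bounded (subdiff (u h) ?D A)" by (rule subdiff_bounded[OF oD A])
        then show "compact (subdiff (u h) ?D A)"
          using subdiff_closed compact_eq_bounded_closed by blast
      qed
      have "(LINT p:cball 0 r|lborel. R p) \<le> measure \<mu> \<Omega>"
        using integral_cover_bound[OF fm sets mesh sub _ feh Rpos Rloc cov cpt] opn by simp
      then have "ennreal (LINT p:cball 0 r|lborel. R p) \<le> ennreal (measure \<mu> \<Omega>)"
        by (rule ennreal_leI)
      also have "\<dots> = emeasure \<mu> \<Omega>" using finite_measure.emeasure_eq_measure[OF fm] by simp
      finally have "ennreal (LINT p:cball 0 r|lborel. R p) \<le> emeasure \<mu> \<Omega>" .
      then show False using r(2) leD by blast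
    qed
    have rD: "0 \<le> r * Dm" using Dm0 r(1) by simp
    have "u h x \<le> G + r * Dm" "- u h x \<le> G + r * Dm" using upx lowx rD by linarith+
    then show ?thesis unfolding abs_le_iff by blast
  qed
  show ?thesis
  proof (intro exI[of _ "G + r * Dm + 1"] conjI ballI)
    have "0 \<le> r * Dm" using Dm0 r(1) by simp
    then show "0 < G + r * Dm + 1" using G(2) by linarith
    fix h x assume hx: "h \<in> I" "x \<in> mesh_domain (\<T> h)"
    have "\<bar>u h x\<bar> \<le> G + r * Dm" by (rule bound[OF hx])
    then show "\<bar>u h x\<bar> \<le> G + r * Dm + 1" by linarith
  qed
qed

end
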